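(* Let $G$ be a connected graph with domination number $\gamma(G)\ge 2$ and let $H$ be any graph. If $X$ is a $\mu_t(G\circ H)$-set, then for every vertex $u\in V(G)$, $$|(\{u\}\times V(H))\cap X|\ge n(H)-1.$$
   Context: All graphs are finite, simple and undirected; $n(G)$ denotes the order of $G$ and $\gamma(G)$ its domination number. The lexicographic product $G\circ H$ has vertex set $V(G)\times V(H)$, with $(x,y)$ adjacent to $(x',y')$ iff $xx'\in E(G)$, or $x=x'$ and $yy'\in E(H)$. Let $F$ be a connected graph and $X\subseteq V(F)$. Two vertices $x,y\in V(F)$ are $X$-visible if there exists a shortest $x,y$-path in $F$ none of whose internal vertices belongs to $X$. $X$ is a total mutual-visibility set of $F$ if every two vertices of $F$ are $X$-visible (the empty set is allowed). $\mu_t(F)$ is the maximum cardinality of a total mutual-visibility set of $F$, and a $\mu_t(F)$-set is a total mutual-visibility set of that cardinality. *)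

theory Defs
  imports Main
begin

definition graph :: "'a set \<Rightarrow> ('a \<Rightarrow> 'a \<Rightarrow> bool) \<Rightarrow> bool" where
  "graph V E \<longleftrightarrow> finite V \<and> (\<forall>x y. E x y \<longrightarrow> x \<in> V \<and> y \<in> V)
     \<and> (\<forall>x y. E x y \<longrightarrow> E y x) \<and> (\<forall>x. \<not> E x x)"

definition walk :: "'a set \<Rightarrow> ('a \<Rightarrow> 'a \<Rightarrow> bool) \<Rightarrow> 'a list \<Rightarrow> bool" where
  "walk V E xs \<longleftrightarrow> xs \<noteq> [] \<and> set xs \<subseteq> V \<and>
     (\<forall>i. Suc i < length xs \<longrightarrow> E (xs ! i) (xs ! Suc i))"

definition walk_betw :: "'a set \<Rightarrow> ('a \<Rightarrow> 'a \<Rightarrow> bool) \<Rightarrow> 'a \<Rightarrow> 'a \<Rightarrow> 'a list \<Rightarrow> bool" where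
  "walk_betw V E x y xs \<longleftrightarrow> walk V E xs \<and> hd xs = x \<and> last xs = y"

definition connected_graph :: "'a set \<Rightarrow> ('a \<Rightarrow> 'a \<Rightarrow> bool) \<Rightarrow> bool" where
  "connected_graph V E \<longleftrightarrow> graph V E \<and> V \<noteq> {} \<and>
     (\<forall>x\<in>V. \<forall>y\<in>V. \<exists>xs. walk_betw V E x y xs)"

definition gdist :: "'a set \<Rightarrow> ('a \<Rightarrow> 'a \<Rightarrow> bool) \<Rightarrow> 'a \<Rightarrow> 'a \<Rightarrow> nat" where
  "gdist V E x y = (LEAST n. \<exists>xs. walk_betw V E x y xs \<and> length xs = Suc n)"

definition shortest_path :: "'a set \<Rightarrow> ('a \<Rightarrow> 'a \<Rightarrow> bool) \<Rightarrow> 'a \<Rightarrow> 'a \<Rightarrow> 'a list \<Rightarrow> bool" where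
  "shortest_path V E x y xs \<longleftrightarrow> walk_betw V E x y xs \<and> length xs = Suc (gdist V E x y)"

definition internal :: "'a list \<Rightarrow> 'a set" where
  "internal xs = set (butlast (tl xs))"

definition X_visible :: "'a set \<Rightarrow> ('a \<Rightarrow> 'a \<Rightarrow> bool) \<Rightarrow> 'a set \<Rightarrow> 'a \<Rightarrow> 'a \<Rightarrow> bool" where
  "X_visible V E X x y \<longleftrightarrow> (\<exists>xs. shortest_path V E x y xs \<and> internal xs \<inter> X = {})"

definition total_mv_set :: "'a set \<Rightarrow> ('a \<Rightarrow> 'a \<Rightarrow> bool) \<Rightarrow> 'a set \<Rightarrow> bool" where
  "total_mv_set V E X \<longleftrightarrow> X \<subseteq> V \<and> (\<forall>x\<in>V. \<forall>y\<in>V. X_visible V E X x y)"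

definition mu_t :: "'a set \<Rightarrow> ('a \<Rightarrow> 'a \<Rightarrow> bool) \<Rightarrow> nat" where
  "mu_t V E = Max (card ` {X. total_mv_set V E X})"

definition mu_t_set :: "'a set \<Rightarrow> ('a \<Rightarrow> 'a \<Rightarrow> bool) \<Rightarrow> 'a set \<Rightarrow> bool" where
  "mu_t_set V E X \<longleftrightarrow> total_mv_set V E X \<and> card X = mu_t V E"

definition dominating_set :: "'a set \<Rightarrow> ('a \<Rightarrow> 'a \<Rightarrow> bool) \<Rightarrow> 'a set \<Rightarrow> bool" where
  "dominating_set V E D \<longleftrightarrow> D \<subseteq> V \<and> (\<forall>v\<in>V. v \<in> D \<or> (\<exists>u\<in>D. E u v))"

definition domination_number :: "'a set \<Rightarrow> ('a \<Rightarrow> 'a \<Rightarrow> bool) \<Rightarrow> nat" where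
  "domination_number V E = Min (card ` {D. dominating_set V E D})"

definition lex_vertices :: "'a set \<Rightarrow> 'b set \<Rightarrow> ('a \<times> 'b) set" where
  "lex_vertices VG VH = VG \<times> VH"

definition lex_edges :: "'a set \<Rightarrow> ('a \<Rightarrow> 'a \<Rightarrow> bool) \<Rightarrow> 'b set \<Rightarrow> ('b \<Rightarrow> 'b \<Rightarrow> bool)
    \<Rightarrow> ('a \<times> 'b) \<Rightarrow> ('a \<times> 'b) \<Rightarrow> bool" where
  "lex_edges VG EG VH EH p q \<longleftrightarrow> p \<in> VG \<times> VH \<and> q \<in> VG \<times> VH \<and>
     (EG (fst p) (fst q) \<or> (fst p = fst q \<and> EH (snd p) (snd q)))"

end

theory Submission
  imports Defs
begin

lemma walk_succ: "walk V E xs \<longleftrightarrow> xs \<noteq> [] \<and> set xs \<subseteq> V \<and> successively E xs"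
  unfolding walk_def successively_conv_nth by blast

lemma shortest_le:
  assumes "shortest_path V E x y xs" "walk_betw V E x y ys"
  shows "length xs \<le> length ys"
proof -
  have ne: "ys \<noteq> []" using assms(2) by (simp add: walk_betw_def walk_def)
  have "gdist V E x y \<le> length ys - 1"
    unfolding gdist_def
    apply (rule Least_le) using assms(2) ne by (intro exI[of _ ys]) auto
  then show ?thesis using assms(1) ne unfolding shortest_path_def by (cases ys) auto
qed

lemma shortest_distinct:
  assumes "shortest_path V E x y xs"
  shows "distinct xs"
proof (rule ccontr)
  assume "\<not> distinct xs"
  then obtain A B C v where xs: "xs = A @ [v] @ B @ [v] @ C" using not_distinct_decomp by blast
  have w: "walk_betw V E x y xs" using assms by (simp add: shortest_path_def)
  have "walk_betw V E x y (A @ [v] @ C)"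
    using w unfolding xs walk_betw_def walk_succ
    by (auto simp: successively_append_iff successively_Cons hd_append)
  from shortest_le[OF assms this] show False unfolding xs by simp
qed

lemma shortest_noshort:
  assumes "shortest_path V E x y xs" "xs = A @ [a, b, c] @ C"
  shows "\<not> E a c"
proof
  assume e: "E a c"
  have w: "walk_betw V E x y xs" using assms by (simp add: shortest_path_def)
  have "walk_betw V E x y (A @ [a, c] @ C)"
    using w e unfolding assms(2) walk_betw_def walk_succ
    by (auto simp: successively_append_iff successively_Cons hd_append)
  from shortest_le[OF assms(1) this] show False unfolding assms(2) by simp
qed

lemma internal_decomp:
  assumes "v \<in> internal xs"
  shows "\<exists>A a c C. xs = A @ [a, v, c] @ C"
proof -
  from assms obtain P Q where PQ: "butlast (tl xs) = P @ v # Q"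
    unfolding internal_def by (meson split_list)
  have ne: "tl xs \<noteq> []" using PQ by auto
  hence "xs = hd xs # tl xs" by (cases xs) auto
  also have "tl xs = butlast (tl xs) @ [last (tl xs)]" using ne by simp
  finally have xs: "xs = hd xs # P @ v # Q @ [last (tl xs)]" using PQ by simp
  obtain A a where Aa: "hd xs # P = A @ [a]" by (metis rev_exhaust list.distinct(1))
  obtain c C where cC: "Q @ [last (tl xs)] = c # C" by (cases "Q @ [last (tl xs)]") auto
  have "xs = A @ [a, v, c] @ C" using xs Aa cC
    by (metis append.assoc append_Cons append_Nil)
  then show ?thesis by blast
qed

lemma internal_eq:
  "internal (A @ [a, w, c] @ C) = insert w (set (tl (A @ [a])) \<union> set (butlast (c # C)))"
proof -
  have "tl (A @ [a, w, c] @ C) = tl (A @ [a]) @ w # c # C"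
    by (cases A) auto
  then show ?thesis unfolding internal_def
    by (simp add: butlast_append)
qed

lemma lex_sym: "graph VG EG \<Longrightarrow> graph VH EH \<Longrightarrow> lex_edges VG EG VH EH p q \<Longrightarrow> lex_edges VG EG VH EH q p"
  unfolding lex_edges_def graph_def by auto

theorem lemma4p1:
  fixes VG :: "'a set" and EG :: "'a \<Rightarrow> 'a \<Rightarrow> bool"
    and VH :: "'b set" and EH :: "'b \<Rightarrow> 'b \<Rightarrow> bool"
    and X :: "('a \<times> 'b) set"
  assumes "connected_graph VG EG"
    and "domination_number VG EG \<ge> 2"
    and "graph VH EH"
    and "mu_t_set (lex_vertices VG VH) (lex_edges VG EG VH EH) X"
    and "u \<in> VG"
  shows "card (({u} \<times> VH) \<inter> X) \<ge> card VH - 1"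
proof (rule ccontr)
  assume neg: "\<not> ?thesis"
  define V where "V = lex_vertices VG VH"
  define E where "E = lex_edges VG EG VH EH"
  have gG: "graph VG EG" using assms(1) by (simp add: connected_graph_def)
  have gH: "graph VH EH" by fact
  have finV: "finite V" using gG gH by (simp add: V_def lex_vertices_def graph_def)
  have tmv: "total_mv_set V E X" and cX: "card X = mu_t V E"
    using assms(4) by (auto simp: mu_t_set_def V_def E_def)
  have XV: "X \<subseteq> V" using tmv by (simp add: total_mv_set_def)
  have vis: "\<And>p q. p \<in> V \<Longrightarrow> q \<in> V \<Longrightarrow> X_visible V E X p q"
    using tmv by (simp add: total_mv_set_def)
  have Esym: "\<And>p q. E p q \<Longrightarrow> E q p" using lex_sym[OF gG gH] by (simp add: E_def)
  have EGirr: "\<And>g. \<not> EG g g" using gG by (simp add: graph_def)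
  have EGsym: "\<And>g g'. EG g g' \<Longrightarrow> EG g' g" using gG by (simp add: graph_def)
  have EGV: "\<And>g g'. EG g g' \<Longrightarrow> g \<in> VG \<and> g' \<in> VG" using gG by (simp add: graph_def)
  define M where "M = {h \<in> VH. (u, h) \<notin> X}"
  define K where "K = {h \<in> VH. (u, h) \<in> X}"
  have finVH: "finite VH" using gH by (simp add: graph_def)
  have cardK: "card (({u} \<times> VH) \<inter> X) = card K"
  proof -
    have "({u} \<times> VH) \<inter> X = Pair u ` K" unfolding K_def by auto
    then show ?thesis by (simp add: card_image inj_on_def)
  qed
  have "card VH = card K + card M"
  proof -
    have "VH = K \<union> M" "K \<inter> M = {}" unfolding K_def M_def by auto
    then show ?thesis using finVH by (metis card_Un_disjoint finite_Un)
  qed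
  hence "card M \<ge> 2" using neg cardK by linarith
  then obtain h1 h2 where h: "h1 \<in> M" "h2 \<in> M" "h1 \<noteq> h2"
    by (metis One_nat_def card_le_Suc_iff numeral_2_eq_2 insert_iff)
  have h1V: "h1 \<in> VH" "(u,h1) \<notin> X" and h2V: "h2 \<in> VH" "(u,h2) \<notin> X"
    using h by (auto simp: M_def)
  obtain w where w: "w \<in> VG" "w \<noteq> u" "\<not> EG u w"
  proof (rule ccontr)
    assume "\<not> thesis"
    hence all: "\<forall>v\<in>VG. v = u \<or> EG u v" using that by blast
    have "dominating_set VG EG {u}" using all assms(5) unfolding dominating_set_def by blast
    moreover have "finite (card ` {D. dominating_set VG EG D})"
    proof -
      have "{D. dominating_set VG EG D} \<subseteq> Pow VG" by (auto simp: dominating_set_def)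
      then show ?thesis using gG by (meson finite_Pow_iff finite_imageI finite_subset graph_def)
    qed
    ultimately have "Min (card ` {D. dominating_set VG EG D}) \<le> card {u}"
      by (intro Min_le) (auto intro: image_eqI[where x="{u}"])
    hence "domination_number VG EG \<le> 1" unfolding domination_number_def by simp
    with assms(2) show False by simp
  qed
  obtain r0 where r0: "r0 \<in> V" "r0 \<notin> X" "EG u (fst r0)"
  proof -
    have "(u,h1) \<in> V" "(w,h1) \<in> V" using assms(5) w h1V by (auto simp: V_def lex_vertices_def)
    then obtain xs where xs: "shortest_path V E (u,h1) (w,h1) xs" "internal xs \<inter> X = {}"
      using vis unfolding X_visible_def by blast
    have wk: "walk V E xs" "hd xs = (u,h1)" "last xs = (w,h1)"
      using xs(1) by (auto simp: shortest_path_def walk_betw_def)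
    define A where "A = takeWhile (\<lambda>p. fst p = u) xs"
    define R where "R = dropWhile (\<lambda>p. fst p = u) xs"
    have AR: "xs = A @ R" by (simp add: A_def R_def)
    have xne: "xs \<noteq> []" using wk(1) walk_succ by blast
    have Rne: "R \<noteq> []"
    proof
      assume "R = []"
      hence "\<forall>p\<in>set xs. fst p = u" by (simp add: R_def)
      moreover have "last xs \<in> set xs" using xne by simp
      ultimately show False using wk(3) w(2) by auto
    qed
    obtain x0 xs0 where x0: "xs = x0 # xs0" using xne by (cases xs) auto
    have "fst x0 = u" using wk(2) x0 by simp
    hence Ane: "A \<noteq> []" unfolding A_def x0 by simp
    have "last A \<in> set A" using Ane by simp
    hence fA: "fst (last A) = u" unfolding A_def by (auto dest: set_takeWhileD)
    have fR: "fst (hd R) \<noteq> u" using hd_dropWhile[OF Rne[unfolded R_def]] by (simp add: R_def)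
    have "successively E xs" using wk walk_succ by blast
    hence "E (last A) (hd R)" using Ane Rne unfolding AR by (simp add: successively_append_iff)
    hence e: "EG u (fst (hd R))" "hd R \<in> V" using fA fR by (auto simp: E_def lex_edges_def V_def lex_vertices_def)
    show ?thesis
    proof (cases "tl R = []")
      case True
      have "last xs = last R" unfolding AR using Rne by simp
      moreover have "last R = hd R" using True Rne by (cases R) auto
      ultimately have "hd R = (w,h1)" using wk(3) by simp
      with e w show ?thesis by simp
    next
      case False
      have "hd R \<in> internal xs"
      proof -
        obtain r1 R1 where rR: "R = r1 # R1" using Rne by (cases R) auto
        have "R1 \<noteq> []" using False rR by simp
        hence "butlast R = r1 # butlast R1" using rR by simp
        moreover have "tl (A @ R) = tl A @ R" using Ane by simp
        ultimately show ?thesis unfolding internal_def AR using rR Rne by (simp add: butlast_append)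
      qed
      with xs(2) e show ?thesis using that by blast
    qed
  qed
  have r0u: "r0 \<noteq> (u,h1)" using r0 EGirr by auto
  define X' where "X' = insert (u,h1) X"
  have uh1V: "(u,h1) \<in> V" using assms(5) h1V by (auto simp: V_def lex_vertices_def)
  have uh2V: "(u,h2) \<in> V" using assms(5) h2V by (auto simp: V_def lex_vertices_def)
  have "total_mv_set V E X'"
    unfolding total_mv_set_def
  proof (intro conjI ballI)
    show "X' \<subseteq> V" using XV uh1V by (simp add: X'_def)
  next
    fix p q assume pq: "p \<in> V" "q \<in> V"
    obtain xs where xs: "shortest_path V E p q xs" "internal xs \<inter> X = {}"
      using vis[OF pq] unfolding X_visible_def by blast
    show "X_visible V E X' p q"
    proof (cases "(u,h1) \<in> internal xs")
      case False
      hence "internal xs \<inter> X' = {}" using xs(2) unfolding X'_def by auto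
      then show ?thesis using xs(1) unfolding X_visible_def by (intro exI[of _ xs]) simp
    next
      case True
      obtain A a c C where dec: "xs = A @ [a, (u,h1), c] @ C"
        using internal_decomp[OF True] by (elim exE)
      have dist: "distinct xs" using shortest_distinct[OF xs(1)] .
      have nac: "\<not> E a c" using shortest_noshort[OF xs(1) dec] .
      have wk: "walk V E xs" "hd xs = p" "last xs = q"
        using xs(1) by (auto simp: shortest_path_def walk_betw_def)
      have sx: "successively E xs" using wk walk_succ by blast
      have ea: "E a (u,h1)" and ec: "E (u,h1) c"
        using sx unfolding dec by (auto simp: successively_append_iff)
      have aV: "a \<in> V" "c \<in> V" using wk(1) unfolding dec walk_succ by auto
      obtain r where r: "r \<in> V" "r \<notin> X" "r \<noteq> (u,h1)" "E a r" "E r c"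
      proof (cases "fst a = u \<or> fst c = u")
        case True
        have both: "fst a = u \<and> fst c = u"
        proof (rule ccontr)
          assume nb: "\<not> ?thesis"
          show False
          proof (cases "fst a = u")
            case True
            hence "fst c \<noteq> u" using nb by simp
            hence "EG u (fst c)" using ec by (auto simp: E_def lex_edges_def)
            hence "E a c" using True aV by (auto simp: E_def lex_edges_def V_def lex_vertices_def)
            with nac show False by simp
          next
            case False
            hence "fst c = u" using \<open>fst a = u \<or> fst c = u\<close> by simp
            moreover have "EG (fst a) u" using ea False by (auto simp: E_def lex_edges_def)
            ultimately have "E a c" using aV by (auto simp: E_def lex_edges_def V_def lex_vertices_def)
            with nac show False by simp
          qed
        qed
        have "E a r0" "E r0 c" using both r0 aV EGsym
          by (auto simp: E_def lex_edges_def V_def lex_vertices_def)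
        then show ?thesis using that r0 r0u by blast
      next
        case False
        hence "EG (fst a) u" "EG u (fst c)" using ea ec by (auto simp: E_def lex_edges_def)
        hence "E a (u,h2)" "E (u,h2) c" using aV uh2V by (auto simp: E_def lex_edges_def V_def lex_vertices_def)
        then show ?thesis using that uh2V h2V h by auto
      qed
      define ys where "ys = A @ [a, r, c] @ C"
      have "walk V E ys" using wk(1) r unfolding ys_def dec walk_succ
        by (auto simp: successively_append_iff successively_Cons)
      moreover have "hd ys = p" "last ys = q" using wk unfolding ys_def dec by (auto simp: hd_append)
      moreover have "length ys = length xs" unfolding ys_def dec by simp
      ultimately have sp: "shortest_path V E p q ys"
        using xs(1) by (simp add: shortest_path_def walk_betw_def)
      have S: "set (tl (A @ [a])) \<union> set (butlast (c # C)) \<subseteq> set A \<union> {a} \<union> {c} \<union> set C"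
      proof -
        have "set (tl (A @ [a])) \<subseteq> set (A @ [a])" by (cases A) auto
        moreover have "set (butlast (c # C)) \<subseteq> set (c # C)" by (meson in_set_butlastD subsetI)
        ultimately show ?thesis by auto
      qed
      have nS: "(u,h1) \<notin> set A \<union> {a} \<union> {c} \<union> set C" using dist unfolding dec by auto
      have "internal ys \<inter> X' = {}"
        using xs(2) r S nS unfolding ys_def X'_def internal_eq dec by blast
      then show ?thesis using sp unfolding X_visible_def by blast
    qed
  qed
  moreover have "finite (card ` {X. total_mv_set V E X})"
  proof -
    have "{X. total_mv_set V E X} \<subseteq> Pow V" by (auto simp: total_mv_set_def)
    then show ?thesis using finV by (meson finite_Pow_iff finite_imageI finite_subset)
  qed
  ultimately have "card X' \<le> mu_t V E" unfolding mu_t_def by (simp add: Max_ge)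
  moreover have "card X' = Suc (card X)" unfolding X'_def using h1V finite_subset[OF XV finV] by simp
  ultimately show False using cX by simp
qed

end
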